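(* For every 3-periodic of the elliptic billiard, the interior angles $\theta^\dagger_{1,i}$ ($i=1,2,3$) of its $f_1$-inversive triangle satisfy $$\sum_{i=1}^3\cos\theta^\dagger_{1,i}=\frac{\delta\,(a^2+c^2-\delta)}{a^2c^2},\qquad \delta=\sqrt{a^4-a^2b^2+b^4}.$$
   Context: The elliptic billiard is $\mathcal{E}: x^2/a^2+y^2/b^2=1$, $a>b>0$, $c=\sqrt{a^2-b^2}$, with focus $f_1=(-c,0)$. A 3-periodic is a triangle $P_1P_2P_3$ inscribed in $\mathcal{E}$ that is a closed billiard trajectory (at each vertex the normal to $\mathcal{E}$ bisects the angle between the two incident sides). The $f_1$-inversive triangle has vertices $P^\dagger_{1,i}=f_1+\rho^2\,(P_i-f_1)/|P_i-f_1|^2$, the inversions of the $P_i$ in a circle of radius $\rho>0$ centered at $f_1$ (its angles do not depend on $\rho$). *)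

theory Defs
  imports "HOL-Analysis.Analysis"
begin

type_synonym pt = "real \<times> real"

definition vec_angle :: "pt \<Rightarrow> pt \<Rightarrow> real" where
  "vec_angle u v = arccos ((u \<bullet> v) / (norm u * norm v))"

definition tri_angle :: "pt \<Rightarrow> pt \<Rightarrow> pt \<Rightarrow> real" where
  "tri_angle A B C = vec_angle (B - A) (C - A)"

definition on_ellipse :: "real \<Rightarrow> real \<Rightarrow> pt \<Rightarrow> bool" where
  "on_ellipse a b P \<longleftrightarrow> (fst P)\<^sup>2 / a\<^sup>2 + (snd P)\<^sup>2 / b\<^sup>2 = 1"

text \<open>Outward normal of the ellipse at P (gradient of the defining function, up to factor 2).\<close>
definition ellipse_normal :: "real \<Rightarrow> real \<Rightarrow> pt \<Rightarrow> pt" where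
  "ellipse_normal a b P = (fst P / a\<^sup>2, snd P / b\<^sup>2)"

text \<open>Billiard reflection law at vertex P with neighbours Q and R:
  the normal line bisects the angle between the two incident sides.\<close>
definition reflects_at :: "real \<Rightarrow> real \<Rightarrow> pt \<Rightarrow> pt \<Rightarrow> pt \<Rightarrow> bool" where
  "reflects_at a b Q P R \<longleftrightarrow>
     vec_angle (Q - P) (ellipse_normal a b P) = vec_angle (R - P) (ellipse_normal a b P)"

definition three_periodic :: "real \<Rightarrow> real \<Rightarrow> pt \<Rightarrow> pt \<Rightarrow> pt \<Rightarrow> bool" where
  "three_periodic a b P1 P2 P3 \<longleftrightarrow>
     P1 \<noteq> P2 \<and> P2 \<noteq> P3 \<and> P1 \<noteq> P3 \<and>
     on_ellipse a b P1 \<and> on_ellipse a b P2 \<and> on_ellipse a b P3 \<and>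
     reflects_at a b P3 P1 P2 \<and> reflects_at a b P1 P2 P3 \<and> reflects_at a b P2 P3 P1"

definition invert :: "pt \<Rightarrow> real \<Rightarrow> pt \<Rightarrow> pt" where
  "invert f rho P = f + (rho\<^sup>2 / (norm (P - f))\<^sup>2) *\<^sub>R (P - f)"

end

theory Submission
  imports Defs
begin


lemma cs_bound: fixes u v :: pt
  shows "\<bar>inner u v / (norm u * norm v)\<bar> \<le> 1"
proof (cases "norm u * norm v = 0")
  case True then show ?thesis by auto
next
  case False
  then have "norm u * norm v > 0" by (simp add: less_le)
  then show ?thesis using Cauchy_Schwarz_ineq2[of u v] by (simp add: abs_div divide_le_eq_1)
qed

lemma cos_vec_angle: "cos (vec_angle u v) = inner u v / (norm u * norm v)"
proof -
  have "\<bar>inner u v / (norm u * norm v)\<bar> \<le> 1" by (rule cs_bound)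
  then have "-1 \<le> inner u v / (norm u * norm v)" "inner u v / (norm u * norm v) \<le> 1"
    by (simp_all only: abs_le_iff) linarith+
  then show ?thesis unfolding vec_angle_def by (rule cos_arccos)
qed

lemma vec_angle_eq: "vec_angle u w = vec_angle v w \<Longrightarrow>
   inner u w / (norm u * norm w) = inner v w / (norm v * norm w)"
  unfolding vec_angle_def using arccos_eq_iff cs_bound by blast

lemma cancel_aux: fixes n n1 n2 u1 u2 :: real
  assumes "n > 0" "n1 > 0" "n2 > 0" "-u1/(n1*n) = -u2/(n2*n)" shows "u1*n2 = u2*n1"
proof -
  have "-u1/(n1*n) * (n1*n*n2) = -u2/(n2*n) * (n1*n*n2)" using assms(4) by simp
  then have "-u1*n2*n = -u2*n1*n" using assms(1-3) by (simp add: field_simps)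
  then show ?thesis using assms(1) by simp
qed

lemma refl_alg:
  fixes a b X Y X1 Y1 X2 Y2 :: real
  assumes ab: "a > 0" "b > 0" and c: "X^2+Y^2=1" 
    and d1: "(X1,Y1) \<noteq> (X,Y)" and d2: "(X2,Y2) \<noteq> (X,Y)"
    and r: "reflects_at a b (a*X1, b*Y1) (a*X, b*Y) (a*X2, b*Y2)"
  shows "(1 - X*X1 - Y*Y1) * norm ((a*X2, b*Y2) - (a*X, b*Y))
       = (1 - X*X2 - Y*Y2) * norm ((a*X1, b*Y1) - (a*X, b*Y))"
proof -
  define N where "N = ellipse_normal a b (a*X, b*Y)"
  have N: "N = (X/a, Y/b)" unfolding N_def ellipse_normal_def using ab
    by (simp add: power2_eq_square)
  have "N \<noteq> 0" using c N ab by (auto simp: zero_prod_def)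
  then have nN: "norm N > 0" by simp
  have n1: "norm ((a*X1, b*Y1) - (a*X, b*Y)) > 0" using d1 ab by (auto simp: zero_prod_def)
  have n2: "norm ((a*X2, b*Y2) - (a*X, b*Y)) > 0" using d2 ab by (auto simp: zero_prod_def)
  have i1: "inner ((a*X1, b*Y1) - (a*X, b*Y)) N = -(1 - X*X1 - Y*Y1)"
    using ab c unfolding N by (simp add: field_simps power2_eq_square) algebra
  have i2: "inner ((a*X2, b*Y2) - (a*X, b*Y)) N = -(1 - X*X2 - Y*Y2)"
    using ab c unfolding N by (simp add: field_simps power2_eq_square) algebra
  have "inner ((a*X1, b*Y1) - (a*X, b*Y)) N / (norm ((a*X1, b*Y1) - (a*X, b*Y)) * norm N)
      = inner ((a*X2, b*Y2) - (a*X, b*Y)) N / (norm ((a*X2, b*Y2) - (a*X, b*Y)) * norm N)"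
    using vec_angle_eq r unfolding reflects_at_def N_def by blast
  then show ?thesis unfolding i1 i2 using n1 n2 nN cancel_aux by blast
qed



lemma chord_len:
  fixes a b X1 Y1 X2 Y2 :: real
  assumes "X1^2+Y1^2=1" "X2^2+Y2^2=1"
  shows "(norm ((a*X1, b*Y1) - (a*X2, b*Y2)))^2
     = (1 - X1*X2 - Y1*Y2) * ((a^2+b^2) - (a^2-b^2)*(X1*X2 - Y1*Y2))"
proof -
  have "(norm ((a*X1, b*Y1) - (a*X2, b*Y2)))^2 = (a*X1-a*X2)^2 + (b*Y1-b*Y2)^2"
    by (simp add: norm_Pair)
  also have "\<dots> = (1 - X1*X2 - Y1*Y2) * ((a^2+b^2) - (a^2-b^2)*(X1*X2 - Y1*Y2))"
    using assms by algebra
  finally show ?thesis .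
qed

lemma focal_dist:
  fixes a b c X Y :: real
  assumes "X^2+Y^2=1" "c^2 = a^2-b^2" "0 \<le> c" "c < a"
  shows "norm ((a*X, b*Y) - (-c, 0)) = a + c*X" "a + c*X > 0"
proof -
  have "X^2 \<le> 1" using assms(1) zero_le_power2[of Y] by linarith
  then have "\<bar>X\<bar> \<le> 1" using abs_square_le_1 by blast
  then have "-1 \<le> X" by linarith
  then have "c*(-1) \<le> c*X" using assms(3) by (rule mult_left_mono)
  then have "c*X \<ge> -c" by simp
  then show pos: "a + c*X > 0" using assms by linarith
  have "norm ((a*X, b*Y) - (-c, 0)) = sqrt ((a*X+c)^2 + (b*Y)^2)" by (simp add: norm_Pair)
  also have "(a*X+c)^2 + (b*Y)^2 = (a+c*X)^2" using assms(1,2) by algebra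
  finally show "norm ((a*X, b*Y) - (-c, 0)) = a + c*X" using pos by simp
qed

lemma invert_dist:
  fixes f P P' :: pt and rho :: real
  assumes "P \<noteq> f" "P' \<noteq> f"
  shows "norm (invert f rho P - invert f rho P') = rho^2 * norm (P - P') / (norm (P - f) * norm (P' - f))"
proof -
  define u where "u = P - f"
  define v where "v = P' - f"
  have u: "norm u > 0" and v: "norm v > 0" using assms unfolding u_def v_def by auto
  have e: "invert f rho P - invert f rho P' = (rho^2/(norm u)^2) *\<^sub>R u - (rho^2/(norm v)^2) *\<^sub>R v"
    unfolding invert_def u_def v_def by simp
  have PP: "P - P' = u - v" unfolding u_def v_def by simp
  have "(norm (invert f rho P - invert f rho P'))^2 = (rho^2 * norm (u - v) / (norm u * norm v))^2"
  proof -
    have g: "\<And>al be. (norm (al *\<^sub>R u - be *\<^sub>R v))^2 = al^2 * (norm u)^2 - 2*al*be*inner u v + be^2*(norm v)^2"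
      unfolding power2_norm_eq_inner by (simp add: inner_diff_left inner_diff_right inner_commute power2_eq_square algebra_simps)
    have h0: "(norm (u - v))^2 = (norm u)^2 - 2*inner u v + (norm v)^2"
      by (simp add: power2_norm_eq_inner inner_diff_left inner_diff_right inner_commute)
    have h: "norm (u - v) * norm (u - v) = norm u * norm u - 2*inner u v + norm v * norm v"
      using h0 by (simp add: power2_eq_square)
    show ?thesis unfolding e g using u v by (simp add: h field_simps power2_eq_square)
  qed
  then have "norm (invert f rho P - invert f rho P') = \<bar>rho^2 * norm (u - v) / (norm u * norm v)\<bar>"
    using real_sqrt_abs by (metis real_sqrt_abs norm_ge_zero abs_of_nonneg)
  also have "\<dots> = rho^2 * norm (u - v) / (norm u * norm v)" using u v by simp
  finally show ?thesis unfolding PP u_def v_def .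
qed

lemma cos_tri_angle:
  "cos (tri_angle A B C) = ((norm (B-A))^2 + (norm (C-A))^2 - (norm (C-B))^2) / (2 * norm (B-A) * norm (C-A))"
proof -
  have "C - B = (C - A) - (B - A)" by simp
  then have "(norm (C-B))^2 = (norm (C-A))^2 - 2 * inner (B-A) (C-A) + (norm (B-A))^2"
    by (simp add: power2_norm_eq_inner inner_diff_left inner_diff_right inner_commute)
  then have h: "inner (B-A) (C-A) = ((norm (B-A))^2 + (norm (C-A))^2 - (norm (C-B))^2)/2" by simp
  show ?thesis unfolding tri_angle_def cos_vec_angle h by (simp add: mult.assoc)
qed


lemma F_pair:
  fixes x y x' y' K g :: complex
  assumes "x^2+y^2=1" "x'^2+y'^2=1" "K + (x*x'+y*y') - g*(x*x' - y*y') = 0"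
  shows "(x+\<i>*y)^2 + (x'+\<i>*y')^2 - g*((x+\<i>*y)^2*(x'+\<i>*y')^2 + 1) + 2*K*(x+\<i>*y)*(x'+\<i>*y') = 0"
proof -
  have ii: "\<i>*\<i> = (-1::complex)" by simp
  show ?thesis using assms ii by algebra
qed

lemma closure_alg:
  fixes X1 Y1 X2 Y2 X3 Y3 K g :: real
  assumes c1: "X1^2+Y1^2=1" and c2: "X2^2+Y2^2=1" and c3: "X3^2+Y3^2=1"
  and d12: "(X1,Y1) \<noteq> (X2,Y2)" and d13: "(X1,Y1) \<noteq> (X3,Y3)" and d23: "(X2,Y2) \<noteq> (X3,Y3)"
  and g0: "g \<noteq> 0"
  and q12: "K + (X1*X2+Y1*Y2) - g*(X1*X2 - Y1*Y2) = 0"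
  and q13: "K + (X1*X3+Y1*Y3) - g*(X1*X3 - Y1*Y3) = 0"
  and q23: "K + (X2*X3+Y2*Y3) - g*(X2*X3 - Y2*Y3) = 0"
  defines "z1 \<equiv> complex_of_real X1 + \<i> * complex_of_real Y1"
      and "z2 \<equiv> complex_of_real X2 + \<i> * complex_of_real Y2"
      and "z3 \<equiv> complex_of_real X3 + \<i> * complex_of_real Y3"
  shows "2*K - 1 = - (g*g)" "z1+z2+z3 + of_real g*(z1*z2*z3) = 0" "z1*z2+z2*z3+z3*z1 + of_real g = 0"
proof -
  let ?c = complex_of_real
  have ii: "\<i>*\<i> = (-1::complex)" by simp
  have cc: "\<And>X Y. X^2+Y^2 = 1 \<Longrightarrow> (?c X)^2 + (?c Y)^2 = 1"
    by (metis of_real_1 of_real_add of_real_power)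
  have cq: "\<And>X Y X' Y'. K + (X*X'+Y*Y') - g*(X*X' - Y*Y') = 0 \<Longrightarrow>
     ?c K + (?c X * ?c X' + ?c Y * ?c Y') - ?c g * (?c X * ?c X' - ?c Y * ?c Y') = 0"
    by (metis of_real_0 of_real_add of_real_diff of_real_mult)
  note F = F_pair[OF cc cc cq]
  have F12: "z1^2 + z2^2 - ?c g*(z1^2*z2^2+1) + 2*?c K*z1*z2 = 0" unfolding z1_def z2_def by (rule F[OF c1 c2 q12])
  have F13: "z1^2 + z3^2 - ?c g*(z1^2*z3^2+1) + 2*?c K*z1*z3 = 0" unfolding z1_def z3_def by (rule F[OF c1 c3 q13])
  have F23: "z2^2 + z3^2 - ?c g*(z2^2*z3^2+1) + 2*?c K*z2*z3 = 0" unfolding z2_def z3_def by (rule F[OF c2 c3 q23])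
  have inj: "\<And>X Y X' Y'. (X,Y) \<noteq> (X',Y') \<Longrightarrow> ?c X + \<i> * ?c Y \<noteq> ?c X' + \<i> * ?c Y'"
    by (simp add: complex_eq_iff)
  have n12: "z1 \<noteq> z2" and n13: "z1 \<noteq> z3" and n23: "z2 \<noteq> z3"
    unfolding z1_def z2_def z3_def using inj d12 d13 d23 by auto
  have "(z2 - z3) * ((1 - ?c g*z1^2)*(z2+z3) + 2*?c K*z1) = 0" using F12 F13 by algebra
  then have G1: "(1 - ?c g*z1^2)*(z2+z3) + 2*?c K*z1 = 0" using n23 by simp
  have "(z1 - z3) * ((1 - ?c g*z2^2)*(z1+z3) + 2*?c K*z2) = 0" using F12 F23 by algebra
  then have G2: "(1 - ?c g*z2^2)*(z1+z3) + 2*?c K*z2 = 0" using n13 by simp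
  have "(z1 - z2) * (2*?c K - 1 - ?c g*(z1*z2+z2*z3+z3*z1)) = 0" using G1 G2 by algebra
  then have E2: "?c g*(z1*z2+z2*z3+z3*z1) = 2*?c K - 1" using n12 by simp
  have E1: "z1+z2+z3 + ?c g*(z1*z2*z3) = 0" using G1 E2 by algebra
  define w1 where "w1 = ?c X1 - \<i> * ?c Y1"
  define w2 where "w2 = ?c X2 - \<i> * ?c Y2"
  define w3 where "w3 = ?c X3 - \<i> * ?c Y3"
  have zw1: "z1*w1 = 1" unfolding z1_def w1_def using cc[OF c1] ii by algebra
  have zw2: "z2*w2 = 1" unfolding z2_def w2_def using cc[OF c2] ii by algebra
  have zw3: "z3*w3 = 1" unfolding z3_def w3_def using cc[OF c3] ii by algebra
  have e2r: "z1*z2+z2*z3+z3*z1 = ?c ((2*K-1)/g)" using E2 g0 by (simp add: field_simps)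
  have "cnj (z1*z2+z2*z3+z3*z1) = w1*w2+w2*w3+w3*w1"
    unfolding z1_def z2_def z3_def w1_def w2_def w3_def by simp
  moreover have "cnj (z1*z2+z2*z3+z3*z1) = z1*z2+z2*z3+z3*z1" unfolding e2r by simp
  ultimately have e2w: "z1*z2+z2*z3+z3*z1 = w1*w2+w2*w3+w3*w1" by simp
  have "(w1*w2+w2*w3+w3*w1) * (z1*z2*z3) = z1+z2+z3" using zw1 zw2 zw3 by algebra
  then have "(z1*z2+z2*z3+z3*z1 + ?c g) * (z1*z2*z3) = 0" using E1 e2w by algebra
  moreover have "z1*z2*z3 \<noteq> 0" using zw1 zw2 zw3 by auto
  ultimately have E2': "z1*z2+z2*z3+z3*z1 + ?c g = 0" by simp
  then have "2*?c K - 1 = - (?c g * ?c g)" using E2 by algebra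
  then have "?c (2*K - 1) = ?c (- (g*g))" by simp
  then show "2*K - 1 = - (g*g)" using of_real_eq_iff by blast
  show "z1+z2+z3 + of_real g*(z1*z2*z3) = 0" using E1 .
  show "z1*z2+z2*z3+z3*z1 + of_real g = 0" using E2' .
qed

definition pp :: "complex \<Rightarrow> complex \<Rightarrow> complex \<Rightarrow> complex" where "pp a c x = c*x^2 + 2*a*x + c"
lemma PA_id: fixes z1 z2 z3 a c :: complex
  shows "((pp a c z2 * (z3-z1)^2)+(pp a c z3 * (z1-z2)^2)-(pp a c z1 * (z2-z3)^2)) * ((pp a c z3 * (z1-z2)^2)+(pp a c z1 * (z2-z3)^2)-(pp a c z2 * (z3-z1)^2)) * ((pp a c z1 * (z2-z3)^2)+(pp a c z2 * (z3-z1)^2)-(pp a c z3 * (z1-z2)^2)) = (32*a^3*(z1+z2+z3)^4*(z1*z2+z2*z3+z3*z1)*(z1*z2*z3) - 8*a^3*(z1+z2+z3)^3*(z1*z2+z2*z3+z3*z1)^3 - 32*a^3*(z1+z2+z3)^3*(z1*z2*z3)^2 - 136*a^3*(z1+z2+z3)^2*(z1*z2+z2*z3+z3*z1)^2*(z1*z2*z3) + 32*a^3*(z1+z2+z3)*(z1*z2+z2*z3+z3*z1)^4 + 360*a^3*(z1+z2+z3)*(z1*z2+z2*z3+z3*z1)*(z1*z2*z3)^2 - 32*a^3*(z1*z2+z2*z3+z3*z1)^3*(z1*z2*z3) - 216*a^3*(z1*z2*z3)^3 + 32*a^2*c*(z1+z2+z3)^5*(z1*z2*z3) - 8*a^2*c*(z1+z2+z3)^4*(z1*z2+z2*z3+z3*z1)^2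 + 32*a^2*c*(z1+z2+z3)^4*(z1*z2*z3)^2 + 24*a^2*c*(z1+z2+z3)^3*(z1*z2+z2*z3+z3*z1)^2*(z1*z2*z3) - 112*a^2*c*(z1+z2+z3)^3*(z1*z2+z2*z3+z3*z1)*(z1*z2*z3) - 8*a^2*c*(z1+z2+z3)^2*(z1*z2+z2*z3+z3*z1)^4 + 24*a^2*c*(z1+z2+z3)^2*(z1*z2+z2*z3+z3*z1)^3 - 144*a^2*c*(z1+z2+z3)^2*(z1*z2+z2*z3+z3*z1)*(z1*z2*z3)^2 + 216*a^2*c*(z1+z2+z3)^2*(z1*z2*z3)^2 - 112*a^2*c*(z1+z2+z3)*(z1*z2+z2*z3+z3*z1)^3*(z1*z2*z3) - 144*a^2*c*(z1+z2+z3)*(z1*z2+z2*z3+z3*z1)^2*(z1*z2*z3) + 216*a^2*c*(z1+z2+z3)*(z1*z2*z3)^3 + 32*a^2*c*(z1*z2+z2*z3+z3*z1)^5 + 32*a^2*c*(z1*z2+z2*z3+z3*z1)^4 + 216*a^2*c*(z1*z2+z2*z3+z3*z1)^2*(z1*z2*z3)^2 + 216*a^2*c*(z1*z2+z2*z3+z3*z1)*(z1*z2*z3)^2 + 32*a*c^2*(z1+z2+z3)^4*(z1*z2+z2*z3+z3*z1)*(z1*z2*z3) + 64*a*c^2*(z1+z2+z3)^4*(z1*z2*z3) - 8*a*c^2*(z1+z2+z3)^3*(z1*z2+z2*z3+z3*z1)^3 - 16*a*c^2*(z1+z2+z3)^3*(z1*z2+z2*z3+z3*z1)^2 + 64*a*c^2*(z1+z2+z3)^3*(z1*z2+z2*z3+z3*z1)*(z1*z2*z3)^2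 + 96*a*c^2*(z1+z2+z3)^3*(z1*z2*z3)^2 - 16*a*c^2*(z1+z2+z3)^2*(z1*z2+z2*z3+z3*z1)^3*(z1*z2*z3) - 168*a*c^2*(z1+z2+z3)^2*(z1*z2+z2*z3+z3*z1)^2*(z1*z2*z3) - 288*a*c^2*(z1+z2+z3)^2*(z1*z2+z2*z3+z3*z1)*(z1*z2*z3) + 32*a*c^2*(z1+z2+z3)*(z1*z2+z2*z3+z3*z1)^4 + 64*a*c^2*(z1+z2+z3)*(z1*z2+z2*z3+z3*z1)^3 - 288*a*c^2*(z1+z2+z3)*(z1*z2+z2*z3+z3*z1)^2*(z1*z2*z3)^2 - 216*a*c^2*(z1+z2+z3)*(z1*z2+z2*z3+z3*z1)*(z1*z2*z3)^2 + 432*a*c^2*(z1+z2+z3)*(z1*z2*z3)^2 + 64*a*c^2*(z1*z2+z2*z3+z3*z1)^4*(z1*z2*z3) + 96*a*c^2*(z1*z2+z2*z3+z3*z1)^3*(z1*z2*z3) + 432*a*c^2*(z1*z2+z2*z3+z3*z1)*(z1*z2*z3)^3 + 648*a*c^2*(z1*z2*z3)^3 + 32*c^3*(z1+z2+z3)^4*(z1*z2*z3)^2 - 8*c^3*(z1+z2+z3)^3*(z1*z2+z2*z3+z3*z1)^2*(z1*z2*z3) + 32*c^3*(z1+z2+z3)^3*(z1*z2+z2*z3+z3*z1)*(z1*z2*z3) + 32*c^3*(z1+z2+z3)^3*(z1*z2*z3)^3 + 32*c^3*(z1+z2+z3)^3*(z1*z2*z3) - 8*c^3*(z1+z2+z3)^2*(z1*z2+z2*z3+z3*z1)^3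 - 8*c^3*(z1+z2+z3)^2*(z1*z2+z2*z3+z3*z1)^2*(z1*z2*z3)^2 - 8*c^3*(z1+z2+z3)^2*(z1*z2+z2*z3+z3*z1)^2 - 144*c^3*(z1+z2+z3)^2*(z1*z2+z2*z3+z3*z1)*(z1*z2*z3)^2 + 32*c^3*(z1+z2+z3)*(z1*z2+z2*z3+z3*z1)^3*(z1*z2*z3) - 144*c^3*(z1+z2+z3)*(z1*z2+z2*z3+z3*z1)^2*(z1*z2*z3) - 144*c^3*(z1+z2+z3)*(z1*z2+z2*z3+z3*z1)*(z1*z2*z3)^3 - 144*c^3*(z1+z2+z3)*(z1*z2+z2*z3+z3*z1)*(z1*z2*z3) + 216*c^3*(z1+z2+z3)*(z1*z2*z3)^3 + 32*c^3*(z1*z2+z2*z3+z3*z1)^4 + 32*c^3*(z1*z2+z2*z3+z3*z1)^3*(z1*z2*z3)^2 + 32*c^3*(z1*z2+z2*z3+z3*z1)^3 + 216*c^3*(z1*z2+z2*z3+z3*z1)*(z1*z2*z3)^2 + 216*c^3*(z1*z2*z3)^4 + 216*c^3*(z1*z2*z3)^2)"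
  unfolding pp_def by algebra
lemma PB_id: fixes z1 z2 z3 a c :: complex
  shows "(pp a c z1 * (z2-z3)^2)*(pp a c z2 * (z3-z1)^2)*(pp a c z3 * (z1-z2)^2) = (- 32*a^3*(z1+z2+z3)^3*(z1*z2*z3)^2 + 8*a^3*(z1+z2+z3)^2*(z1*z2+z2*z3+z3*z1)^2*(z1*z2*z3) + 144*a^3*(z1+z2+z3)*(z1*z2+z2*z3+z3*z1)*(z1*z2*z3)^2 - 32*a^3*(z1*z2+z2*z3+z3*z1)^3*(z1*z2*z3) - 216*a^3*(z1*z2*z3)^3 - 16*a^2*c*(z1+z2+z3)^4*(z1*z2*z3)^2 + 4*a^2*c*(z1+z2+z3)^3*(z1*z2+z2*z3+z3*z1)^2*(z1*z2*z3) - 16*a^2*c*(z1+z2+z3)^3*(z1*z2+z2*z3+z3*z1)*(z1*z2*z3) + 4*a^2*c*(z1+z2+z3)^2*(z1*z2+z2*z3+z3*z1)^3 + 72*a^2*c*(z1+z2+z3)^2*(z1*z2+z2*z3+z3*z1)*(z1*z2*z3)^2 - 16*a^2*c*(z1+z2+z3)*(z1*z2+z2*z3+z3*z1)^3*(z1*z2*z3) + 72*a^2*c*(z1+z2+z3)*(z1*z2+z2*z3+z3*z1)^2*(z1*z2*z3) - 108*a^2*c*(z1+z2+z3)*(z1*z2*z3)^3 - 16*a^2*c*(z1*z2+z2*z3+z3*z1)^4 - 108*a^2*c*(z1*z2+z2*z3+z3*z1)*(z1*z2*z3)^2 - 8*a*c^2*(z1+z2+z3)^4*(z1*z2+z2*z3+z3*z1)*(z1*z2*z3)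 - 8*a*c^2*(z1+z2+z3)^4*(z1*z2*z3) + 2*a*c^2*(z1+z2+z3)^3*(z1*z2+z2*z3+z3*z1)^3 + 2*a*c^2*(z1+z2+z3)^3*(z1*z2+z2*z3+z3*z1)^2 - 8*a*c^2*(z1+z2+z3)^3*(z1*z2+z2*z3+z3*z1)*(z1*z2*z3)^2 + 24*a*c^2*(z1+z2+z3)^3*(z1*z2*z3)^2 + 2*a*c^2*(z1+z2+z3)^2*(z1*z2+z2*z3+z3*z1)^3*(z1*z2*z3) + 30*a*c^2*(z1+z2+z3)^2*(z1*z2+z2*z3+z3*z1)^2*(z1*z2*z3) + 36*a*c^2*(z1+z2+z3)^2*(z1*z2+z2*z3+z3*z1)*(z1*z2*z3) - 8*a*c^2*(z1+z2+z3)*(z1*z2+z2*z3+z3*z1)^4 - 8*a*c^2*(z1+z2+z3)*(z1*z2+z2*z3+z3*z1)^3 + 36*a*c^2*(z1+z2+z3)*(z1*z2+z2*z3+z3*z1)^2*(z1*z2*z3)^2 - 162*a*c^2*(z1+z2+z3)*(z1*z2+z2*z3+z3*z1)*(z1*z2*z3)^2 - 54*a*c^2*(z1+z2+z3)*(z1*z2*z3)^2 - 8*a*c^2*(z1*z2+z2*z3+z3*z1)^4*(z1*z2*z3) + 24*a*c^2*(z1*z2+z2*z3+z3*z1)^3*(z1*z2*z3) - 54*a*c^2*(z1*z2+z2*z3+z3*z1)*(z1*z2*z3)^3 + 162*a*c^2*(z1*z2*z3)^3 - 4*c^3*(z1+z2+z3)^5*(z1*z2*z3) + c^3*(z1+z2+z3)^4*(z1*z2+z2*z3+z3*z1)^2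 + 8*c^3*(z1+z2+z3)^4*(z1*z2*z3)^2 - 6*c^3*(z1+z2+z3)^3*(z1*z2+z2*z3+z3*z1)^2*(z1*z2*z3) + 26*c^3*(z1+z2+z3)^3*(z1*z2+z2*z3+z3*z1)*(z1*z2*z3) - 4*c^3*(z1+z2+z3)^3*(z1*z2*z3)^3 - 4*c^3*(z1+z2+z3)^3*(z1*z2*z3) + c^3*(z1+z2+z3)^2*(z1*z2+z2*z3+z3*z1)^4 - 6*c^3*(z1+z2+z3)^2*(z1*z2+z2*z3+z3*z1)^3 + c^3*(z1+z2+z3)^2*(z1*z2+z2*z3+z3*z1)^2*(z1*z2*z3)^2 + c^3*(z1+z2+z3)^2*(z1*z2+z2*z3+z3*z1)^2 - 36*c^3*(z1+z2+z3)^2*(z1*z2+z2*z3+z3*z1)*(z1*z2*z3)^2 - 27*c^3*(z1+z2+z3)^2*(z1*z2*z3)^2 + 26*c^3*(z1+z2+z3)*(z1*z2+z2*z3+z3*z1)^3*(z1*z2*z3) - 36*c^3*(z1+z2+z3)*(z1*z2+z2*z3+z3*z1)^2*(z1*z2*z3) + 18*c^3*(z1+z2+z3)*(z1*z2+z2*z3+z3*z1)*(z1*z2*z3)^3 + 18*c^3*(z1+z2+z3)*(z1*z2+z2*z3+z3*z1)*(z1*z2*z3) + 54*c^3*(z1+z2+z3)*(z1*z2*z3)^3 - 4*c^3*(z1*z2+z2*z3+z3*z1)^5 + 8*c^3*(z1*z2+z2*z3+z3*z1)^4 - 4*c^3*(z1*z2+z2*z3+z3*z1)^3*(z1*z2*z3)^2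 - 4*c^3*(z1*z2+z2*z3+z3*z1)^3 - 27*c^3*(z1*z2+z2*z3+z3*z1)^2*(z1*z2*z3)^2 + 54*c^3*(z1*z2+z2*z3+z3*z1)*(z1*z2*z3)^2 - 27*c^3*(z1*z2*z3)^4 - 27*c^3*(z1*z2*z3)^2)"
  unfolding pp_def by algebra
lemma G0: fixes e1 e2 e3 g a c :: complex
  assumes "e1 = -g*e3" "e2 = -g" "c^2*g^2 + 2*(2*a^2-c^2)*g - 3*c^2 = 0"
  shows "a^2*c^2*(32*a^3*e1^4*e2*e3 - 8*a^3*e1^3*e2^3 - 32*a^3*e1^3*e3^2 - 136*a^3*e1^2*e2^2*e3 + 32*a^3*e1*e2^4 + 360*a^3*e1*e2*e3^2 - 32*a^3*e2^3*e3 - 216*a^3*e3^3 + 32*a^2*c*e1^5*e3 - 8*a^2*c*e1^4*e2^2 + 32*a^2*c*e1^4*e3^2 + 24*a^2*c*e1^3*e2^2*e3 - 112*a^2*c*e1^3*e2*e3 - 8*a^2*c*e1^2*e2^4 + 24*a^2*c*e1^2*e2^3 - 144*a^2*c*e1^2*e2*e3^2 + 216*a^2*c*e1^2*e3^2 - 112*a^2*c*e1*e2^3*e3 - 144*a^2*c*e1*e2^2*e3 + 216*a^2*c*e1*e3^3 + 32*a^2*c*e2^5 + 32*a^2*c*e2^4 + 216*a^2*c*e2^2*e3^2 + 216*a^2*c*e2*e3^2 + 32*a*c^2*e1^4*e2*e3 + 64*a*c^2*e1^4*e3 - 8*a*c^2*e1^3*e2^3 - 16*a*c^2*e1^3*e2^2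 + 64*a*c^2*e1^3*e2*e3^2 + 96*a*c^2*e1^3*e3^2 - 16*a*c^2*e1^2*e2^3*e3 - 168*a*c^2*e1^2*e2^2*e3 - 288*a*c^2*e1^2*e2*e3 + 32*a*c^2*e1*e2^4 + 64*a*c^2*e1*e2^3 - 288*a*c^2*e1*e2^2*e3^2 - 216*a*c^2*e1*e2*e3^2 + 432*a*c^2*e1*e3^2 + 64*a*c^2*e2^4*e3 + 96*a*c^2*e2^3*e3 + 432*a*c^2*e2*e3^3 + 648*a*c^2*e3^3 + 32*c^3*e1^4*e3^2 - 8*c^3*e1^3*e2^2*e3 + 32*c^3*e1^3*e2*e3 + 32*c^3*e1^3*e3^3 + 32*c^3*e1^3*e3 - 8*c^3*e1^2*e2^3 - 8*c^3*e1^2*e2^2*e3^2 - 8*c^3*e1^2*e2^2 - 144*c^3*e1^2*e2*e3^2 + 32*c^3*e1*e2^3*e3 - 144*c^3*e1*e2^2*e3 - 144*c^3*e1*e2*e3^3 - 144*c^3*e1*e2*e3 + 216*c^3*e1*e3^3 + 32*c^3*e2^4 + 32*c^3*e2^3*e3^2 + 32*c^3*e2^3 + 216*c^3*e2*e3^2 + 216*c^3*e3^4 + 216*c^3*e3^2) + 2*((g*c^2+2*a^2-c^2)/2-a^2)*((g*c^2+2*a^2-c^2)/2-c^2)*(- 32*a^3*e1^3*e3^2 + 8*a^3*e1^2*e2^2*e3 + 144*a^3*e1*e2*e3^2 - 32*a^3*e2^3*e3 - 216*a^3*e3^3 - 16*a^2*c*e1^4*e3^2 + 4*a^2*c*e1^3*e2^2*e3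 - 16*a^2*c*e1^3*e2*e3 + 4*a^2*c*e1^2*e2^3 + 72*a^2*c*e1^2*e2*e3^2 - 16*a^2*c*e1*e2^3*e3 + 72*a^2*c*e1*e2^2*e3 - 108*a^2*c*e1*e3^3 - 16*a^2*c*e2^4 - 108*a^2*c*e2*e3^2 - 8*a*c^2*e1^4*e2*e3 - 8*a*c^2*e1^4*e3 + 2*a*c^2*e1^3*e2^3 + 2*a*c^2*e1^3*e2^2 - 8*a*c^2*e1^3*e2*e3^2 + 24*a*c^2*e1^3*e3^2 + 2*a*c^2*e1^2*e2^3*e3 + 30*a*c^2*e1^2*e2^2*e3 + 36*a*c^2*e1^2*e2*e3 - 8*a*c^2*e1*e2^4 - 8*a*c^2*e1*e2^3 + 36*a*c^2*e1*e2^2*e3^2 - 162*a*c^2*e1*e2*e3^2 - 54*a*c^2*e1*e3^2 - 8*a*c^2*e2^4*e3 + 24*a*c^2*e2^3*e3 - 54*a*c^2*e2*e3^3 + 162*a*c^2*e3^3 - 4*c^3*e1^5*e3 + c^3*e1^4*e2^2 + 8*c^3*e1^4*e3^2 - 6*c^3*e1^3*e2^2*e3 + 26*c^3*e1^3*e2*e3 - 4*c^3*e1^3*e3^3 - 4*c^3*e1^3*e3 + c^3*e1^2*e2^4 - 6*c^3*e1^2*e2^3 + c^3*e1^2*e2^2*e3^2 + c^3*e1^2*e2^2 - 36*c^3*e1^2*e2*e3^2 - 27*c^3*e1^2*e3^2 + 26*c^3*e1*e2^3*e3 - 36*c^3*e1*e2^2*e3 + 18*c^3*e1*e2*e3^3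 + 18*c^3*e1*e2*e3 + 54*c^3*e1*e3^3 - 4*c^3*e2^5 + 8*c^3*e2^4 - 4*c^3*e2^3*e3^2 - 4*c^3*e2^3 - 27*c^3*e2^2*e3^2 + 54*c^3*e2*e3^2 - 27*c^3*e3^4 - 27*c^3*e3^2) = 0"
  using assms by algebra
lemma key_complex: fixes z1 z2 z3 a c g :: complex
  assumes "z1+z2+z3 + g*(z1*z2*z3) = 0" "z1*z2+z2*z3+z3*z1 + g = 0"
     "c^2*g^2 + 2*(2*a^2-c^2)*g - 3*c^2 = 0"
  shows "a^2*c^2*(((pp a c z2 * (z3-z1)^2)+(pp a c z3 * (z1-z2)^2)-(pp a c z1 * (z2-z3)^2)) * ((pp a c z3 * (z1-z2)^2)+(pp a c z1 * (z2-z3)^2)-(pp a c z2 * (z3-z1)^2)) * ((pp a c z1 * (z2-z3)^2)+(pp a c z2 * (z3-z1)^2)-(pp a c z3 * (z1-z2)^2))) + 2*((g*c^2+2*a^2-c^2)/2-a^2)*((g*c^2+2*a^2-c^2)/2-c^2)*((pp a c z1 * (z2-z3)^2)*(pp a c z2 * (z3-z1)^2)*(pp a c z3 * (z1-z2)^2)) = 0"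
proof -
  have e1: "z1+z2+z3 = -g*(z1*z2*z3)" using assms(1) by (simp add: eq_neg_iff_add_eq_0)
  have e2: "z1*z2+z2*z3+z3*z1 = -g" using assms(2) by (simp add: eq_neg_iff_add_eq_0)
  show ?thesis unfolding PA_id PB_id
    by (rule G0[OF e1 e2 assms(3)])
qed


lemma cube_hom: fixes u1 u2 u3 w1 w2 w3 k A B :: complex
  assumes "k*w1 = -u1" "k*w2 = -u2" "k*w3 = -u3"
  shows "k^3*(A*((w2+w3-w1)*(w3+w1-w2)*(w1+w2-w3)) + B*(w1*w2*w3))
       = -(A*((u2+u3-u1)*(u3+u1-u2)*(u1+u2-u3)) + B*(u1*u2*u3))"
  using assms by algebra

lemma W_complex:
  fixes X1 Y1 X2 Y2 X3 Y3 a c :: real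
  assumes "X1^2+Y1^2=1" "X2^2+Y2^2=1" "X3^2+Y3^2=1"
  defines "z1 \<equiv> complex_of_real X1 + \<i> * complex_of_real Y1"
      and "z2 \<equiv> complex_of_real X2 + \<i> * complex_of_real Y2"
      and "z3 \<equiv> complex_of_real X3 + \<i> * complex_of_real Y3"
  shows "4*(z1*z2*z3) * complex_of_real ((1 - X2*X3 - Y2*Y3)*(a + c*X1)) = - (pp (of_real a) (of_real c) z1 * (z2-z3)^2)"
proof -
  have ii: "\<i>*\<i> = (-1::complex)" by simp
  have cc: "\<And>X Y. X^2+Y^2 = 1 \<Longrightarrow> (complex_of_real X)^2 + (complex_of_real Y)^2 = 1"
    by (metis of_real_1 of_real_add of_real_power)
  show ?thesis unfolding z1_def z2_def z3_def pp_def using cc[OF assms(1)] cc[OF assms(2)] cc[OF assms(3)] ii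
    by (simp only: of_real_mult of_real_diff of_real_add of_real_1) algebra
qed

lemma final_sum:
  fixes X1 Y1 X2 Y2 X3 Y3 a c g W1 W2 W3 :: real
  assumes c1: "X1^2+Y1^2=1" and c2: "X2^2+Y2^2=1" and c3: "X3^2+Y3^2=1"
  and ac: "a \<noteq> 0" "c \<noteq> 0"
  and E1: "z1+z2+z3 + of_real g*(z1*z2*z3) = 0" and E2: "z1*z2+z2*z3+z3*z1 + of_real g = 0"
  and H3: "c^2*g^2 + 2*(2*a^2-c^2)*g - 3*c^2 = 0"
  and W1: "W1 = (1 - X2*X3 - Y2*Y3)*(a + c*X1)"
  and W2: "W2 = (1 - X3*X1 - Y3*Y1)*(a + c*X2)"
  and W3: "W3 = (1 - X1*X2 - Y1*Y2)*(a + c*X3)"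
  and Wnz: "W1 \<noteq> 0" "W2 \<noteq> 0" "W3 \<noteq> 0"
  and z1: "z1 = complex_of_real X1 + \<i> * complex_of_real Y1"
  and z2: "z2 = complex_of_real X2 + \<i> * complex_of_real Y2"
  and z3: "z3 = complex_of_real X3 + \<i> * complex_of_real Y3"
  and d: "d = (g*c^2+2*a^2-c^2)/2"
  shows "(W2^2+W3^2-W1^2)/(2*W2*W3) + (W3^2+W1^2-W2^2)/(2*W3*W1) + (W1^2+W2^2-W3^2)/(2*W1*W2)
         = 1 - (d-a^2)*(d-c^2)/(a^2*c^2)"
proof -
  let ?c = complex_of_real
  let ?k = "4*(z1*z2*z3)"
  have w1: "?k * ?c W1 = - (pp (?c a) (?c c) z1 * (z2-z3)^2)"
    unfolding W1 z1 z2 z3 by (rule W_complex[OF c1 c2 c3])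
  have w2: "?k * ?c W2 = - (pp (?c a) (?c c) z2 * (z3-z1)^2)"
  proof -
    have "4*(z2*z3*z1) * ?c W2 = - (pp (?c a) (?c c) z2 * (z3-z1)^2)"
      unfolding W2 z1 z2 z3 by (rule W_complex[OF c2 c3 c1])
    then show ?thesis by (simp add: ac_simps)
  qed
  have w3: "?k * ?c W3 = - (pp (?c a) (?c c) z3 * (z1-z2)^2)"
  proof -
    have "4*(z3*z1*z2) * ?c W3 = - (pp (?c a) (?c c) z3 * (z1-z2)^2)"
      unfolding W3 z1 z2 z3 by (rule W_complex[OF c3 c1 c2])
    then show ?thesis by (simp add: ac_simps)
  qed
  have H3c: "(?c c)^2*(?c g)^2 + 2*(2*(?c a)^2-(?c c)^2)*(?c g) - 3*(?c c)^2 = 0"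
  proof -
    have "?c (c^2*g^2 + 2*(2*a^2-c^2)*g - 3*c^2) = 0" using H3 by simp
    then show ?thesis by simp
  qed
  note Z = key_complex[OF E1 E2 H3c]
  define A where "A = (?c a)^2*(?c c)^2"
  define B where "B = 2*(((?c g)*(?c c)^2+2*(?c a)^2-(?c c)^2)/2-(?c a)^2)*(((?c g)*(?c c)^2+2*(?c a)^2-(?c c)^2)/2-(?c c)^2)"
  have "?k^3*(A*((?c W2+?c W3-?c W1)*(?c W3+?c W1-?c W2)*(?c W1+?c W2-?c W3)) + B*(?c W1*?c W2*?c W3)) = 0"
    unfolding cube_hom[OF w1 w2 w3] using Z unfolding A_def B_def by simp
  moreover have "?k \<noteq> 0"
  proof -
    have nz: "\<And>X Y. X^2+Y^2 = 1 \<Longrightarrow> ?c X + \<i> * ?c Y \<noteq> 0"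
      by (auto simp: complex_eq_iff)
    show ?thesis unfolding z1 z2 z3 using nz[OF c1] nz[OF c2] nz[OF c3] by simp
  qed
  ultimately have "A*((?c W2+?c W3-?c W1)*(?c W3+?c W1-?c W2)*(?c W1+?c W2-?c W3)) + B*(?c W1*?c W2*?c W3) = 0"
    by simp
  then have "?c (a^2*c^2*((W2+W3-W1)*(W3+W1-W2)*(W1+W2-W3)) + 2*(d-a^2)*(d-c^2)*(W1*W2*W3)) = 0"
    unfolding A_def B_def d by simp
  then have R: "a^2*c^2*((W2+W3-W1)*(W3+W1-W2)*(W1+W2-W3)) = - 2*(d-a^2)*(d-c^2)*(W1*W2*W3)"
    by (simp only: of_real_eq_0_iff)
  have "(W2^2+W3^2-W1^2)/(2*W2*W3) + (W3^2+W1^2-W2^2)/(2*W3*W1) + (W1^2+W2^2-W3^2)/(2*W1*W2)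
        = 1 + ((W2+W3-W1)*(W3+W1-W2)*(W1+W2-W3))/(2*W1*W2*W3)"
    using Wnz by (simp add: field_simps) algebra
  also have "\<dots> = 1 - (d-a^2)*(d-c^2)/(a^2*c^2)"
  proof -
    have "(W2+W3-W1)*(W3+W1-W2)*(W1+W2-W3) = - 2*(d-a^2)*(d-c^2)*(W1*W2*W3) / (a^2*c^2)"
      using R ac by (simp add: field_simps)
    then show ?thesis using Wnz ac by (simp add: field_simps)
  qed
  finally show ?thesis .
qed


lemma scale_cos: fixes k A B C :: real
  assumes "k \<noteq> 0" "A \<noteq> 0" "B \<noteq> 0"
  shows "((k*A)^2 + (k*B)^2 - (k*C)^2)/(2*(k*A)*(k*B)) = (A^2+B^2-C^2)/(2*A*B)"
  using assms by (simp add: power_mult_distrib field_simps) algebra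

lemma pt_ne: fixes a b X Y X' Y' :: real
  assumes "a > 0" "b > 0" "(a*X, b*Y) \<noteq> (a*X', b*Y')" shows "(X,Y) \<noteq> (X',Y')"
  using assms by auto

lemma w_pos: fixes X Y X' Y' :: real
  assumes "X^2+Y^2=1" "X'^2+Y'^2=1" "(X,Y) \<noteq> (X',Y')"
  shows "1 - X*X' - Y*Y' > 0"
proof -
  have e: "1 - X*X' - Y*Y' = ((X-X')^2 + (Y-Y')^2)/2" using assms(1,2) by algebra
  have "X \<noteq> X' \<or> Y \<noteq> Y'" using assms(3) by auto
  then have "(X-X')^2 + (Y-Y')^2 > 0"
    by (simp add: sum_power2_gt_zero_iff)
  then show ?thesis unfolding e by simp
qed

theorem mainTheorem12:
  fixes a b rho :: real and P1 P2 P3 :: pt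
  assumes "a > b" "b > 0" "rho > 0"
    and "three_periodic a b P1 P2 P3"
  defines "c \<equiv> sqrt (a\<^sup>2 - b\<^sup>2)"
    and "\<delta> \<equiv> sqrt (a ^ 4 - a\<^sup>2 * b\<^sup>2 + b ^ 4)"
  defines "f1 \<equiv> (- c, 0)"
  defines "Q1 \<equiv> invert f1 rho P1" and "Q2 \<equiv> invert f1 rho P2" and "Q3 \<equiv> invert f1 rho P3"
  shows "cos (tri_angle Q1 Q2 Q3) + cos (tri_angle Q2 Q3 Q1) + cos (tri_angle Q3 Q1 Q2)
         = \<delta> * (a\<^sup>2 + c\<^sup>2 - \<delta>) / (a\<^sup>2 * c\<^sup>2)"
proof -
  have a0: "a > 0" and b0: "b > 0" using assms(1,2) by auto
  have tp: "P1 \<noteq> P2" "P2 \<noteq> P3" "P1 \<noteq> P3" "on_ellipse a b P1" "on_ellipse a b P2" "on_ellipse a b P3"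
     "reflects_at a b P3 P1 P2" "reflects_at a b P1 P2 P3"
    using assms(4) unfolding three_periodic_def by auto
  have cc: "c^2 = a^2 - b^2" unfolding c_def using assms(1,2) by simp
  have c0: "c > 0" unfolding c_def using assms(1,2) by (simp add: power_strict_mono)
  have ca: "c < a"
  proof (rule power2_less_imp_less)
    show "c^2 < a^2" using cc b0 by simp
    show "0 \<le> a" using a0 by simp
  qed
  obtain x1 y1 where p1: "P1 = (x1,y1)" by fastforce
  obtain x2 y2 where p2: "P2 = (x2,y2)" by fastforce
  obtain x3 y3 where p3: "P3 = (x3,y3)" by fastforce
  define X1 where "X1 = x1/a"
  define X2 where "X2 = x2/a"
  define X3 where "X3 = x3/a"
  define Y1 where "Y1 = y1/b"
  define Y2 where "Y2 = y2/b"
  define Y3 where "Y3 = y3/b"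
  have P1: "P1 = (a*X1, b*Y1)" unfolding p1 X1_def Y1_def using a0 b0 by simp
  have P2: "P2 = (a*X2, b*Y2)" unfolding p2 X2_def Y2_def using a0 b0 by simp
  have P3: "P3 = (a*X3, b*Y3)" unfolding p3 X3_def Y3_def using a0 b0 by simp
  have c1: "X1^2+Y1^2=1" using tp(4) unfolding on_ellipse_def p1 X1_def Y1_def by (simp add: power_divide)
  have c2: "X2^2+Y2^2=1" using tp(5) unfolding on_ellipse_def p2 X2_def Y2_def by (simp add: power_divide)
  have c3: "X3^2+Y3^2=1" using tp(6) unfolding on_ellipse_def p3 X3_def Y3_def by (simp add: power_divide)
  have d12: "(X1,Y1) \<noteq> (X2,Y2)" using tp(1) pt_ne[OF a0 b0] unfolding P1 P2 by blast
  have d23: "(X2,Y2) \<noteq> (X3,Y3)" using tp(2) pt_ne[OF a0 b0] unfolding P2 P3 by blast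
  have d13: "(X1,Y1) \<noteq> (X3,Y3)" using tp(3) pt_ne[OF a0 b0] unfolding P1 P3 by blast
  define w1 where "w1 = 1 - X2*X3 - Y2*Y3"
  define w2 where "w2 = 1 - X3*X1 - Y3*Y1"
  define w3 where "w3 = 1 - X1*X2 - Y1*Y2"
  have w1p: "w1 > 0" unfolding w1_def using w_pos[OF c2 c3 d23] .
  have w2p: "w2 > 0" unfolding w2_def using w_pos[OF c3 c1] d13 by auto
  have w3p: "w3 > 0" unfolding w3_def using w_pos[OF c1 c2 d12] .
  define L1 where "L1 = norm (P2 - P3)"
  define L2 where "L2 = norm (P3 - P1)"
  define L3 where "L3 = norm (P1 - P2)"
  have L1p: "L1 > 0" unfolding L1_def using tp(2) by simp
  have L2p: "L2 > 0" unfolding L2_def using tp(3) by simp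
  have L3p: "L3 > 0" unfolding L3_def using tp(1) by simp
  have r1: "w2 * L3 = w3 * L2"
  proof -
    have "(1 - X1*X3 - Y1*Y3) * norm (P2 - P1) = (1 - X1*X2 - Y1*Y2) * norm (P3 - P1)"
      using refl_alg[OF a0 b0 c1, of X3 Y3 X2 Y2] d13 d12 tp(7) unfolding P1 P2 P3 by auto
    then show ?thesis unfolding w2_def w3_def L2_def L3_def by (simp add: norm_minus_commute mult.commute)
  qed
  have r2: "w3 * L1 = w1 * L3"
  proof -
    have "(1 - X2*X1 - Y2*Y1) * norm (P3 - P2) = (1 - X2*X3 - Y2*Y3) * norm (P1 - P2)"
      using refl_alg[OF a0 b0 c2, of X1 Y1 X3 Y3] d12 d23 tp(8) unfolding P1 P2 P3 by auto
    then show ?thesis unfolding w1_def w3_def L1_def L3_def by (simp add: norm_minus_commute mult.commute)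
  qed
  define \<mu> where "\<mu> = w1 / L1"
  have mup: "\<mu> > 0" unfolding \<mu>_def using w1p L1p by simp
  have m1: "w1 = \<mu> * L1" unfolding \<mu>_def using L1p by simp
  have m3: "w3 = \<mu> * L3" using r2 L1p unfolding \<mu>_def by (simp add: field_simps)
  have m2: "w2 = \<mu> * L2" using r1 m3 L3p by (simp add: field_simps)
  define s where "s = \<mu>^2"
  have ch1: "L1^2 = w1 * ((a^2+b^2) - (a^2-b^2)*(X2*X3 - Y2*Y3))"
    unfolding L1_def P2 P3 w1_def using chord_len[OF c2 c3] .
  have ch2: "L2^2 = w2 * ((a^2+b^2) - (a^2-b^2)*(X3*X1 - Y3*Y1))"
    unfolding L2_def P3 P1 w2_def using chord_len[OF c3 c1] .
  have ch3: "L3^2 = w3 * ((a^2+b^2) - (a^2-b^2)*(X1*X2 - Y1*Y2))"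
    unfolding L3_def P1 P2 w3_def using chord_len[OF c1 c2] .
  have sq: "\<And>w L Q. w > 0 \<Longrightarrow> w = \<mu>*L \<Longrightarrow> L^2 = w*Q \<Longrightarrow> w = s*Q"
  proof -
    fix w L Q :: real assume "w > 0" "w = \<mu>*L" "L^2 = w*Q"
    then have "w*w = \<mu>^2 * L^2" by (simp add: power2_eq_square)
    also have "\<dots> = w*(s*Q)" using \<open>L^2 = w*Q\<close> unfolding s_def by simp
    finally have "w*w = w*(s*Q)" .
    then show "w = s*Q" using \<open>w > 0\<close> by simp
  qed
  have s1: "w1 = s * ((a^2+b^2) - (a^2-b^2)*(X2*X3 - Y2*Y3))" using sq[OF w1p m1 ch1] .
  have s2: "w2 = s * ((a^2+b^2) - (a^2-b^2)*(X3*X1 - Y3*Y1))" using sq[OF w2p m2 ch2] .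
  have s3: "w3 = s * ((a^2+b^2) - (a^2-b^2)*(X1*X2 - Y1*Y2))" using sq[OF w3p m3 ch3] .
  define K where "K = s*(a^2+b^2) - 1"
  define g where "g = s*c^2"
  have sp: "s > 0" unfolding s_def using mup by simp
  have gp: "g > 0" unfolding g_def using sp c0 by simp
  have q12: "K + (X1*X2+Y1*Y2) - g*(X1*X2 - Y1*Y2) = 0"
    using s3 unfolding K_def g_def cc w3_def by algebra
  have q13: "K + (X1*X3+Y1*Y3) - g*(X1*X3 - Y1*Y3) = 0"
    using s2 unfolding K_def g_def cc w2_def by algebra
  have q23: "K + (X2*X3+Y2*Y3) - g*(X2*X3 - Y2*Y3) = 0"
    using s1 unfolding K_def g_def cc w1_def by algebra
  note CL = closure_alg[OF c1 c2 c3 d12 d13 d23 _ q12 q13 q23]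
  have gnz: "g \<noteq> 0" using gp by simp
  have KG: "2*K - 1 = - (g*g)" using CL(1)[OF gnz] .
  have H3: "c^2*g^2 + 2*(2*a^2-c^2)*g - 3*c^2 = 0"
    using KG unfolding K_def g_def cc by algebra
  define d where "d = (g*c^2+2*a^2-c^2)/2"
  have dsq: "d^2 = a ^ 4 - a\<^sup>2 * b\<^sup>2 + b ^ 4"
  proof -
    have e: "2*d = s*(a^2-b^2)*(a^2-b^2) + 2*a^2 - (a^2-b^2)" unfolding d_def g_def cc by simp
    have "(2*d)^2 = 4*(a ^ 4 - a\<^sup>2 * b\<^sup>2 + b ^ 4)"
      using KG unfolding e K_def g_def cc by algebra
    then show ?thesis by simp
  qed
  have dpos: "d > 0"
  proof -
    have "g*c^2 > 0" using gp c0 by simp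
    moreover have "c^2 < a^2" using cc b0 by simp
    moreover have "c^2 \<ge> 0" by simp
    ultimately have "0 < g*c^2 + 2*a^2 - c^2" by linarith
    then show ?thesis unfolding d_def by simp
  qed
  have dd: "\<delta> = d" unfolding \<delta>_def dsq[symmetric] using dpos by simp
  have cge: "0 \<le> c" using c0 by simp
  note FD1 = focal_dist[OF c1 cc cge ca]
  note FD2 = focal_dist[OF c2 cc cge ca]
  note FD3 = focal_dist[OF c3 cc cge ca]
  define R1 where "R1 = a + c*X1"
  define R2 where "R2 = a + c*X2"
  define R3 where "R3 = a + c*X3"
  have nr1: "norm (P1 - f1) = R1" and R1p: "R1 > 0" unfolding P1 f1_def R1_def using FD1 by auto
  have nr2: "norm (P2 - f1) = R2" and R2p: "R2 > 0" unfolding P2 f1_def R2_def using FD2 by auto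
  have nr3: "norm (P3 - f1) = R3" and R3p: "R3 > 0" unfolding P3 f1_def R3_def using FD3 by auto
  have nf1: "P1 \<noteq> f1" using nr1 R1p by auto
  have nf2: "P2 \<noteq> f1" using nr2 R2p by auto
  have nf3: "P3 \<noteq> f1" using nr3 R3p by auto
  define W1 where "W1 = w1 * R1"
  define W2 where "W2 = w2 * R2"
  define W3 where "W3 = w3 * R3"
  have W1p: "W1 > 0" unfolding W1_def using w1p R1p by simp
  have W2p: "W2 > 0" unfolding W2_def using w2p R2p by simp
  have W3p: "W3 > 0" unfolding W3_def using w3p R3p by simp
  define \<kappa> where "\<kappa> = rho^2 / (\<mu> * R1 * R2 * R3)"
  have kp: "\<kappa> > 0" unfolding \<kappa>_def using assms(3) mup R1p R2p R3p by simp
  have D12: "norm (Q2 - Q1) = \<kappa> * W3"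
  proof -
    have "norm (Q2 - Q1) = rho^2 * L3 / (R2 * R1)"
      unfolding Q1_def Q2_def invert_dist[OF nf2 nf1] nr1 nr2 L3_def by (simp add: norm_minus_commute)
    then show ?thesis unfolding \<kappa>_def W3_def m3 using mup R1p R2p R3p by (simp add: field_simps)
  qed
  have D13: "norm (Q3 - Q1) = \<kappa> * W2"
  proof -
    have "norm (Q3 - Q1) = rho^2 * L2 / (R3 * R1)"
      unfolding Q1_def Q3_def invert_dist[OF nf3 nf1] nr1 nr3 L2_def by simp
    then show ?thesis unfolding \<kappa>_def W2_def m2 using mup R1p R2p R3p by (simp add: field_simps)
  qed
  have D23: "norm (Q3 - Q2) = \<kappa> * W1"
  proof -
    have "norm (Q3 - Q2) = rho^2 * L1 / (R3 * R2)"
      unfolding Q2_def Q3_def invert_dist[OF nf3 nf2] nr2 nr3 L1_def by (simp add: norm_minus_commute)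
    then show ?thesis unfolding \<kappa>_def W1_def m1 using mup R1p R2p R3p by (simp add: field_simps)
  qed
  have knz: "\<kappa> \<noteq> 0" using kp by simp
  have cos1: "cos (tri_angle Q1 Q2 Q3) = (W3^2+W2^2-W1^2)/(2*W3*W2)"
    unfolding cos_tri_angle D12 D13 D23 using scale_cos[OF knz, of W3 W2 W1] W2p W3p by simp
  have cos2: "cos (tri_angle Q2 Q3 Q1) = (W1^2+W3^2-W2^2)/(2*W1*W3)"
    unfolding cos_tri_angle D12 D13 D23 norm_minus_commute[of Q1 Q2] norm_minus_commute[of Q1 Q3]
    using scale_cos[OF knz, of W1 W3 W2] W1p W3p by simp
  have cos3: "cos (tri_angle Q3 Q1 Q2) = (W2^2+W1^2-W3^2)/(2*W2*W1)"
    unfolding cos_tri_angle D12 D13 D23 norm_minus_commute[of Q1 Q3] norm_minus_commute[of Q2 Q3]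
    using scale_cos[OF knz, of W2 W1 W3] W1p W2p by simp
  have FS: "(W2^2+W3^2-W1^2)/(2*W2*W3) + (W3^2+W1^2-W2^2)/(2*W3*W1) + (W1^2+W2^2-W3^2)/(2*W1*W2)
         = 1 - (d-a^2)*(d-c^2)/(a^2*c^2)"
    by (rule final_sum[OF c1 c2 c3 _ _ CL(2)[OF gnz] CL(3)[OF gnz] H3 _ _ _ _ _ _ refl refl refl d_def])
       (use a0 c0 W1p W2p W3p in \<open>auto simp: W1_def W2_def W3_def w1_def w2_def w3_def R1_def R2_def R3_def\<close>)
  have "cos (tri_angle Q1 Q2 Q3) + cos (tri_angle Q2 Q3 Q1) + cos (tri_angle Q3 Q1 Q2)
       = 1 - (d-a^2)*(d-c^2)/(a^2*c^2)"
    unfolding cos1 cos2 cos3 FS[symmetric] by (simp add: ac_simps)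
  also have "\<dots> = \<delta> * (a\<^sup>2 + c\<^sup>2 - \<delta>) / (a\<^sup>2 * c\<^sup>2)"
    unfolding dd using a0 c0 by (simp add: field_simps)
  finally show ?thesis .
qed

end
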